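(* Let $(X_i)_{i\in\mathbb{Z}}$ be a stationary standard semicircular sequence with covariance function $\rho$ in a $\ast$-probability space $(\mathcal{A},\phi)$, with $\rho(t)\to0$ as $|t|\to\infty$. Let $U(x)=\sum_{n=1}^{K}c_nU_n(x)$ be a real polynomial (finite Chebyshev expansion, $c_0=0$) with Chebyshev rank $k_\ast$, and let $\rho_U(t)=\phi(U(X_0)U(X_t))$. Then $$\rho_U(t)=\sum_{k=k_\ast}^{K}c_k^2\,\rho(t)^k\quad(t\in\mathbb{Z}),$$ and $$\sum_{n\in\mathbb{Z}}|\rho_U(n)|<\infty\iff\sum_{n\in\mathbb{Z}}|\rho(n)|^{k_\ast}<\infty.$$ *)

theory Defs
  imports "HOL-Analysis.Analysis"
begin

definition star_prob_space ::
  "(complex \<Rightarrow> 'a::ring_1 \<Rightarrow> 'a) \<Rightarrow> ('a \<Rightarrow> 'a) \<Rightarrow> ('a \<Rightarrow> complex) \<Rightarrow> bool" where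
  "star_prob_space sc st \<phi> \<longleftrightarrow>
     (\<forall>x. sc 1 x = x) \<and>
     (\<forall>a b x. sc (a * b) x = sc a (sc b x)) \<and>
     (\<forall>a b x. sc (a + b) x = sc a x + sc b x) \<and>
     (\<forall>a x y. sc a (x + y) = sc a x + sc a y) \<and>
     (\<forall>a x y. sc a (x * y) = sc a x * y) \<and>
     (\<forall>a x y. sc a (x * y) = x * sc a y) \<and>
     (\<forall>x. st (st x) = x) \<and>
     (\<forall>x y. st (x + y) = st x + st y) \<and>
     (\<forall>x y. st (x * y) = st y * st x) \<and>
     (\<forall>a x. st (sc a x) = sc (cnj a) (st x)) \<and>
     (\<forall>x y. \<phi> (x + y) = \<phi> x + \<phi> y) \<and>
     (\<forall>a x. \<phi> (sc a x) = a * \<phi> x) \<and>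
     \<phi> 1 = 1 \<and>
     (\<forall>x. Im (\<phi> (st x * x)) = 0 \<and> Re (\<phi> (st x * x)) \<ge> 0)"

definition nc_pairings :: "nat \<Rightarrow> (nat \<times> nat) set set" where
  "nc_pairings n = {\<pi>. \<pi> \<subseteq> {(r, s). r < s \<and> s < n} \<and>
      (\<forall>i<n. \<exists>!p. p \<in> \<pi> \<and> (fst p = i \<or> snd p = i)) \<and>
      (\<forall>a b c d. (a, b) \<in> \<pi> \<longrightarrow> (c, d) \<in> \<pi> \<longrightarrow> \<not> (a < c \<and> c < b \<and> b < d))}"

text \<open>A stationary standard semicircular sequence with covariance function rho:
  self-adjoint elements whose mixed moments are given by the non-crossing pairing
  (free Wick) formula with covariance phi(X_i X_j) = rho(j - i), rho(0) = 1.\<close>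

definition stationary_std_semicircular ::
  "(complex \<Rightarrow> 'a::ring_1 \<Rightarrow> 'a) \<Rightarrow> ('a \<Rightarrow> 'a) \<Rightarrow> ('a \<Rightarrow> complex) \<Rightarrow> (int \<Rightarrow> 'a)
     \<Rightarrow> (int \<Rightarrow> real) \<Rightarrow> bool" where
  "stationary_std_semicircular sc st \<phi> X \<rho> \<longleftrightarrow>
     (\<forall>i. st (X i) = X i) \<and> \<rho> 0 = 1 \<and>
     (\<forall>is :: int list. \<phi> (prod_list (map X is)) =
        complex_of_real (\<Sum>\<pi>\<in>nc_pairings (length is). \<Prod>(r, s)\<in>\<pi>. \<rho> (is ! s - is ! r)))"

text \<open>Chebyshev polynomials of the second kind adapted to the standard semicircle on [-2,2]:
  U_0 = 1, U_1 = x, U_(n+2) = x U_(n+1) - U_n; evaluated in any ring.\<close>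

fun chebU :: "nat \<Rightarrow> 'a::ring_1 \<Rightarrow> 'a" where
  "chebU 0 x = 1"
| "chebU (Suc 0) x = x"
| "chebU (Suc (Suc n)) x = x * chebU (Suc n) x - chebU n x"

definition cheb_eval :: "(complex \<Rightarrow> 'a::ring_1 \<Rightarrow> 'a) \<Rightarrow> (nat \<Rightarrow> real) \<Rightarrow> nat \<Rightarrow> 'a \<Rightarrow> 'a" where
  "cheb_eval sc c K x = (\<Sum>n=1..K. sc (complex_of_real (c n)) (chebU n x))"

definition cheb_rank :: "(nat \<Rightarrow> real) \<Rightarrow> nat \<Rightarrow> nat \<Rightarrow> bool" where
  "cheb_rank c K k \<longleftrightarrow> 1 \<le> k \<and> k \<le> K \<and> c k \<noteq> 0 \<and> (\<forall>n. 1 \<le> n \<and> n < k \<longrightarrow> c n = 0)"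

end

theory Submission
  imports Defs
begin


definition shares :: "nat \<times> nat \<Rightarrow> nat \<times> nat \<Rightarrow> bool" where
  "shares p q \<longleftrightarrow> fst p = fst q \<or> fst p = snd q \<or> snd p = fst q \<or> snd p = snd q"

lemma nc_memI:
  assumes "\<pi> \<subseteq> {(r, s). r < s \<and> s < n}"
    and "\<And>i. i < n \<Longrightarrow> \<exists>p\<in>\<pi>. fst p = i \<or> snd p = i"
    and "\<And>p q. p \<in> \<pi> \<Longrightarrow> q \<in> \<pi> \<Longrightarrow> shares p q \<Longrightarrow> p = q"
    and "\<And>a b c d. (a, b) \<in> \<pi> \<Longrightarrow> (c, d) \<in> \<pi> \<Longrightarrow> \<not> (a < c \<and> c < b \<and> b < d)"
  shows "\<pi> \<in> nc_pairings n"
  unfolding nc_pairings_def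
proof (intro CollectI conjI allI impI)
  fix i assume "i < n"
  then obtain p where p: "p \<in> \<pi>" "fst p = i \<or> snd p = i" using assms(2) by blast
  show "\<exists>!p. p \<in> \<pi> \<and> (fst p = i \<or> snd p = i)"
  proof (rule ex1I[of _ p])
    fix q assume "q \<in> \<pi> \<and> (fst q = i \<or> snd q = i)"
    then show "q = p" using assms(3)[of q p] p unfolding shares_def by auto
  qed (use p in auto)
qed (use assms in auto)

lemma nc_sub: "\<pi> \<in> nc_pairings n \<Longrightarrow> p \<in> \<pi> \<Longrightarrow> fst p < snd p \<and> snd p < n"
  unfolding nc_pairings_def by auto

lemma nc_cover: "\<pi> \<in> nc_pairings n \<Longrightarrow> i < n \<Longrightarrow> \<exists>p\<in>\<pi>. fst p = i \<or> snd p = i"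
  unfolding nc_pairings_def by blast

lemma nc_nocross: "\<pi> \<in> nc_pairings n \<Longrightarrow> (a, b) \<in> \<pi> \<Longrightarrow> (c, d) \<in> \<pi> \<Longrightarrow> \<not> (a < c \<and> c < b \<and> b < d)"
  unfolding nc_pairings_def by blast

lemma nc_uniq:
  assumes "\<pi> \<in> nc_pairings n" "p \<in> \<pi>" "q \<in> \<pi>" "shares p q"
  shows "p = q"
proof -
  have u: "\<And>i. i < n \<Longrightarrow> \<exists>!p. p \<in> \<pi> \<and> (fst p = i \<or> snd p = i)"
    using assms(1) unfolding nc_pairings_def by blast
  have bp: "fst p < n" "snd p < n" "fst q < n" "snd q < n"
    using nc_sub[OF assms(1) assms(2)] nc_sub[OF assms(1) assms(3)] by auto
  obtain i where i: "i < n" "fst p = i \<or> snd p = i" "fst q = i \<or> snd q = i"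
    using assms(4) bp unfolding shares_def by blast
  show ?thesis using u[OF i(1)] i(2,3) assms(2,3) by blast
qed

lemma nc_finite_set: "finite (nc_pairings n)"
proof -
  have "nc_pairings n \<subseteq> Pow ({..<n} \<times> {..<n})" unfolding nc_pairings_def by auto
  then show ?thesis by (rule finite_subset) auto
qed

lemma nc_elem_finite: "\<pi> \<in> nc_pairings n \<Longrightarrow> finite \<pi>"
proof -
  assume "\<pi> \<in> nc_pairings n"
  then have "\<pi> \<subseteq> {..<n} \<times> {..<n}" unfolding nc_pairings_def by auto
  then show ?thesis by (rule finite_subset) auto
qed

definition sh :: "nat \<Rightarrow> (nat \<times> nat) set \<Rightarrow> (nat \<times> nat) set" where
  "sh k \<pi> = (\<lambda>(a, b). (a + k, b + k)) ` \<pi>"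

definition gl :: "nat \<Rightarrow> (nat \<times> nat) set \<times> (nat \<times> nat) set \<Rightarrow> (nat \<times> nat) set" where
  "gl s pp = insert (0, Suc s) (sh 1 (fst pp) \<union> sh (s + 2) (snd pp))"

definition un1 :: "nat \<Rightarrow> (nat \<times> nat) set \<Rightarrow> (nat \<times> nat) set" where
  "un1 s \<pi> = (\<lambda>(a, b). (a - 1, b - 1)) ` {p\<in>\<pi>. snd p \<le> s}"

definition un2 :: "nat \<Rightarrow> (nat \<times> nat) set \<Rightarrow> (nat \<times> nat) set" where
  "un2 s \<pi> = (\<lambda>(a, b). (a - (s + 2), b - (s + 2))) ` {p\<in>\<pi>. s + 2 \<le> fst p}"

lemma sh_iff: "(x, y) \<in> sh k \<pi> \<longleftrightarrow> k \<le> x \<and> k \<le> y \<and> (x - k, y - k) \<in> \<pi>"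
proof
  assume "(x, y) \<in> sh k \<pi>"
  then obtain a b where "(a, b) \<in> \<pi>" "x = a + k" "y = b + k" unfolding sh_def by auto
  then show "k \<le> x \<and> k \<le> y \<and> (x - k, y - k) \<in> \<pi>" by simp
next
  assume h: "k \<le> x \<and> k \<le> y \<and> (x - k, y - k) \<in> \<pi>"
  then have "(x, y) = (\<lambda>(a, b). (a + k, b + k)) (x - k, y - k)" by simp
  then show "(x, y) \<in> sh k \<pi>" unfolding sh_def using h by blast
qed

lemma gl_iff: "(x, y) \<in> gl s pp \<longleftrightarrow> (x = 0 \<and> y = Suc s) \<or> (x, y) \<in> sh 1 (fst pp) \<or> (x, y) \<in> sh (s + 2) (snd pp)"
  unfolding gl_def by auto

lemma gl_mem:
  assumes p1: "\<pi>1 \<in> nc_pairings s" and p2: "\<pi>2 \<in> nc_pairings m"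
  shows "gl s (\<pi>1, \<pi>2) \<in> nc_pairings (s + m + 2)"
proof -
  have A: "(x, y) \<in> sh 1 \<pi>1 \<Longrightarrow> 0 < x \<and> x < y \<and> y \<le> s" for x y
    using nc_sub[OF p1, of "(x-1,y-1)"] unfolding sh_iff by auto
  have B: "(x, y) \<in> sh (s+2) \<pi>2 \<Longrightarrow> s + 2 \<le> x \<and> x < y \<and> y < s + m + 2" for x y
    using nc_sub[OF p2, of "(x-(s+2),y-(s+2))"] unfolding sh_iff by auto
  have C: "(x, y) \<in> sh 1 \<pi>1 \<Longrightarrow> (z, w) \<in> sh 1 \<pi>1 \<Longrightarrow> shares (x,y) (z,w) \<Longrightarrow> (x,y) = (z,w)" for x y z w
    using nc_uniq[OF p1, of "(x-1,y-1)" "(z-1,w-1)"] A[of x y] A[of z w] unfolding sh_iff shares_def by auto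
  have D: "(x, y) \<in> sh (s+2) \<pi>2 \<Longrightarrow> (z, w) \<in> sh (s+2) \<pi>2 \<Longrightarrow> shares (x,y) (z,w) \<Longrightarrow> (x,y) = (z,w)" for x y z w
    using nc_uniq[OF p2, of "(x-(s+2),y-(s+2))" "(z-(s+2),w-(s+2))"] B[of x y] B[of z w] unfolding sh_iff shares_def by auto
  have C2: "(x, y) \<in> sh 1 \<pi>1 \<Longrightarrow> (z, w) \<in> sh 1 \<pi>1 \<Longrightarrow> \<not> (x < z \<and> z < y \<and> y < w)" for x y z w
    using nc_nocross[OF p1, of "x-1" "y-1" "z-1" "w-1"] A[of x y] A[of z w] unfolding sh_iff by auto
  have D2: "(x, y) \<in> sh (s+2) \<pi>2 \<Longrightarrow> (z, w) \<in> sh (s+2) \<pi>2 \<Longrightarrow> \<not> (x < z \<and> z < y \<and> y < w)" for x y z w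
    using nc_nocross[OF p2, of "x-(s+2)" "y-(s+2)" "z-(s+2)" "w-(s+2)"] B[of x y] B[of z w] unfolding sh_iff by auto
  show ?thesis
  proof (rule nc_memI)
    show "gl s (\<pi>1, \<pi>2) \<subseteq> {(r, sa). r < sa \<and> sa < s + m + 2}"
    proof
      fix p assume "p \<in> gl s (\<pi>1, \<pi>2)"
      then obtain x y where "p = (x, y)" "(x, y) \<in> gl s (\<pi>1, \<pi>2)" by (cases p) auto
      then show "p \<in> {(r, sa). r < sa \<and> sa < s + m + 2}"
        using A[of x y] B[of x y] unfolding gl_iff by auto
    qed
  next
    fix i assume i: "i < s + m + 2"
    consider "i = 0 \<or> i = Suc s" | "0 < i \<and> i < Suc s" | "Suc s < i" by linarith
    then show "\<exists>p\<in>gl s (\<pi>1, \<pi>2). fst p = i \<or> snd p = i"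
    proof cases
      case 1 then show ?thesis unfolding gl_def by auto
    next
      case 2
      then have "i - 1 < s" by auto
      then obtain a b where ab: "(a, b) \<in> \<pi>1" "a = i - 1 \<or> b = i - 1" using nc_cover[OF p1, of "i - 1"] by auto
      have "(a + 1, b + 1) \<in> gl s (\<pi>1, \<pi>2)" using ab unfolding gl_iff sh_iff by simp
      then show ?thesis using ab 2 by (intro bexI[of _ "(a + 1, b + 1)"]) auto
    next
      case 3
      then have "i - (s+2) < m" using i by auto
      then obtain a b where ab: "(a, b) \<in> \<pi>2" "a = i - (s+2) \<or> b = i - (s+2)" using nc_cover[OF p2, of "i - (s+2)"] by auto
      have "(a + (s+2), b + (s+2)) \<in> gl s (\<pi>1, \<pi>2)" using ab unfolding gl_iff sh_iff by simp
      then show ?thesis using ab 3 by (intro bexI[of _ "(a + (s+2), b + (s+2))"]) auto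
    qed
  next
    fix p q assume p: "p \<in> gl s (\<pi>1, \<pi>2)" and q: "q \<in> gl s (\<pi>1, \<pi>2)" and shpq: "shares p q"
    obtain x y z w where pq: "p = (x, y)" "q = (z, w)" by (cases p, cases q) auto
    have p': "(x = 0 \<and> y = Suc s) \<or> (x, y) \<in> sh 1 \<pi>1 \<or> (x, y) \<in> sh (s + 2) \<pi>2"
      using p unfolding pq gl_iff by simp
    have q': "(z = 0 \<and> w = Suc s) \<or> (z, w) \<in> sh 1 \<pi>1 \<or> (z, w) \<in> sh (s + 2) \<pi>2"
      using q unfolding pq gl_iff by simp
    have shr: "x = z \<or> x = w \<or> y = z \<or> y = w" using shpq unfolding pq shares_def by simp
    show "p = q" unfolding pq
    proof -
      from p' show "(x, y) = (z, w)"
      proof (elim disjE)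
        assume h: "x = 0 \<and> y = Suc s"
        from q' show ?thesis
        proof (elim disjE)
          assume "(z, w) \<in> sh 1 \<pi>1" then show ?thesis using A[of z w] h shr by linarith
        next
          assume "(z, w) \<in> sh (s + 2) \<pi>2" then show ?thesis using B[of z w] h shr by linarith
        qed (use h in simp)
      next
        assume h: "(x, y) \<in> sh 1 \<pi>1"
        from q' show ?thesis
        proof (elim disjE)
          assume "z = 0 \<and> w = Suc s" then show ?thesis using A[of x y] h shr by linarith
        next
          assume "(z, w) \<in> sh 1 \<pi>1" then show ?thesis using C[of x y z w] h shr unfolding shares_def by simp
        next
          assume "(z, w) \<in> sh (s + 2) \<pi>2" then show ?thesis using A[of x y] B[of z w] h shr by linarith
        qed
      next
        assume h: "(x, y) \<in> sh (s + 2) \<pi>2"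
        from q' show ?thesis
        proof (elim disjE)
          assume "z = 0 \<and> w = Suc s" then show ?thesis using B[of x y] h shr by linarith
        next
          assume "(z, w) \<in> sh 1 \<pi>1" then show ?thesis using A[of z w] B[of x y] h shr by linarith
        next
          assume "(z, w) \<in> sh (s + 2) \<pi>2" then show ?thesis using D[of x y z w] h shr unfolding shares_def by simp
        qed
      qed
    qed
  next
    fix a b c d assume ab: "(a, b) \<in> gl s (\<pi>1, \<pi>2)" and cd: "(c, d) \<in> gl s (\<pi>1, \<pi>2)"
    have p': "(a = 0 \<and> b = Suc s) \<or> (a, b) \<in> sh 1 \<pi>1 \<or> (a, b) \<in> sh (s + 2) \<pi>2"
      using ab unfolding gl_iff by simp
    have q': "(c = 0 \<and> d = Suc s) \<or> (c, d) \<in> sh 1 \<pi>1 \<or> (c, d) \<in> sh (s + 2) \<pi>2"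
      using cd unfolding gl_iff by simp
    from p' show "\<not> (a < c \<and> c < b \<and> b < d)"
    proof (elim disjE)
      assume h: "a = 0 \<and> b = Suc s"
      from q' show ?thesis
      proof (elim disjE)
        assume "(c, d) \<in> sh 1 \<pi>1" then show ?thesis using A[of c d] h by linarith
      next
        assume "(c, d) \<in> sh (s + 2) \<pi>2" then show ?thesis using B[of c d] h by linarith
      qed (use h in simp)
    next
      assume h: "(a, b) \<in> sh 1 \<pi>1"
      from q' show ?thesis
      proof (elim disjE)
        assume "c = 0 \<and> d = Suc s" then show ?thesis using A[OF h] by linarith
      next
        assume "(c, d) \<in> sh 1 \<pi>1" then show ?thesis using C2[OF h] by blast
      next
        assume "(c, d) \<in> sh (s + 2) \<pi>2" then show ?thesis using A[OF h] B[of c d] by linarith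
      qed
    next
      assume h: "(a, b) \<in> sh (s + 2) \<pi>2"
      from q' show ?thesis
      proof (elim disjE)
        assume "c = 0 \<and> d = Suc s" then show ?thesis using B[OF h] by linarith
      next
        assume "(c, d) \<in> sh 1 \<pi>1" then show ?thesis using A[of c d] B[OF h] by linarith
      next
        assume "(c, d) \<in> sh (s + 2) \<pi>2" then show ?thesis using D2[OF h] by blast
      qed
    qed
  qed
qed


lemma un1_iff:
  assumes "\<And>c d. (c, d) \<in> \<pi> \<Longrightarrow> d \<le> s \<Longrightarrow> 1 \<le> c \<and> c < d"
  shows "(x, y) \<in> un1 s \<pi> \<longleftrightarrow> (x + 1, y + 1) \<in> \<pi> \<and> y + 1 \<le> s"
proof
  assume "(x, y) \<in> un1 s \<pi>"
  then obtain c d where cd: "(c, d) \<in> \<pi>" "d \<le> s" "x = c - 1" "y = d - 1" unfolding un1_def by auto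
  with assms[OF cd(1,2)] show "(x + 1, y + 1) \<in> \<pi> \<and> y + 1 \<le> s" by auto
next
  assume h: "(x + 1, y + 1) \<in> \<pi> \<and> y + 1 \<le> s"
  then have "(x, y) = (\<lambda>(a, b). (a - 1, b - 1)) (x + 1, y + 1)" by simp
  then show "(x, y) \<in> un1 s \<pi>" unfolding un1_def using h by (intro image_eqI) auto
qed

lemma un2_iff:
  assumes "\<And>c d. (c, d) \<in> \<pi> \<Longrightarrow> c < d"
  shows "(x, y) \<in> un2 s \<pi> \<longleftrightarrow> (x + (s + 2), y + (s + 2)) \<in> \<pi>"
proof
  assume "(x, y) \<in> un2 s \<pi>"
  then obtain c d where cd: "(c, d) \<in> \<pi>" "s + 2 \<le> c" "x = c - (s+2)" "y = d - (s+2)" unfolding un2_def by auto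
  moreover have "s + 2 \<le> d" using assms[OF cd(1)] cd(2) by simp
  ultimately have "x + (s + 2) = c" "y + (s + 2) = d" by simp_all
  then show "(x + (s + 2), y + (s + 2)) \<in> \<pi>" using cd(1) by simp
next
  assume h: "(x + (s + 2), y + (s + 2)) \<in> \<pi>"
  then have "(x, y) = (\<lambda>(a, b). (a - (s + 2), b - (s + 2))) (x + (s + 2), y + (s + 2))" by simp
  then show "(x, y) \<in> un2 s \<pi>" unfolding un2_def using h by (intro image_eqI) auto
qed


lemma nc_split_fact:
  assumes P: "\<pi> \<in> nc_pairings (s + m + 2)" and z: "(0, Suc s) \<in> \<pi>" and cd: "(c, d) \<in> \<pi>"
  shows "(c = 0 \<and> d = Suc s) \<or> (1 \<le> c \<and> c < d \<and> d \<le> s) \<or> (s + 2 \<le> c \<and> c < d \<and> d < s + m + 2)"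
proof -
  have o: "c < d" "d < s + m + 2" using nc_sub[OF P cd] by auto
  have nx: "\<not> (0 < c \<and> c < Suc s \<and> Suc s < d)" using nc_nocross[OF P z cd] by simp
  show ?thesis
  proof (cases "c = 0 \<or> c = Suc s \<or> d = Suc s")
    case True
    then have "shares (0, Suc s) (c, d)" unfolding shares_def by auto
    then have "(c, d) = (0, Suc s)" using nc_uniq[OF P z cd] by simp
    then show ?thesis by simp
  next
    case False
    then show ?thesis using o nx by linarith
  qed
qed

lemma nc_ord: "\<pi> \<in> nc_pairings n \<Longrightarrow> (c, d) \<in> \<pi> \<Longrightarrow> c < d"
  using nc_sub by fastforce

lemma un_mem:
  assumes P: "\<pi> \<in> nc_pairings (s + m + 2)" and z: "(0, Suc s) \<in> \<pi>"
  shows "un1 s \<pi> \<in> nc_pairings s" "un2 s \<pi> \<in> nc_pairings m" "gl s (un1 s \<pi>, un2 s \<pi>) = \<pi>"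
proof -
  note F = nc_split_fact[OF P z]
  have h1: "\<And>c d. (c, d) \<in> \<pi> \<Longrightarrow> d \<le> s \<Longrightarrow> 1 \<le> c \<and> c < d"
    using F by fastforce
  note I1 = un1_iff[where \<pi>=\<pi> and s=s, OF h1]
  note I2 = un2_iff[where \<pi>=\<pi> and s=s, OF nc_ord[OF P]]
  show "un1 s \<pi> \<in> nc_pairings s"
  proof (rule nc_memI)
    show "un1 s \<pi> \<subseteq> {(r, sa). r < sa \<and> sa < s}"
    proof
      fix p assume "p \<in> un1 s \<pi>"
      then obtain x y where xy: "p = (x, y)" "(x + 1, y + 1) \<in> \<pi>" "y + 1 \<le> s" using I1 by (cases p) auto
      then show "p \<in> {(r, sa). r < sa \<and> sa < s}" using nc_ord[OF P xy(2)] by auto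
    qed
  next
    fix i assume i: "i < s"
    then obtain c d where cd: "(c, d) \<in> \<pi>" "c = i + 1 \<or> d = i + 1" using nc_cover[OF P, of "i+1"] by auto
    have "1 \<le> c \<and> c < d \<and> d \<le> s" using F[OF cd(1)] cd(2) i by auto
    then have "(c - 1, d - 1) \<in> un1 s \<pi>" using I1 cd by simp
    then show "\<exists>p\<in>un1 s \<pi>. fst p = i \<or> snd p = i" using cd(2) by (intro bexI[of _ "(c-1,d-1)"]) auto
  next
    fix p q assume p: "p \<in> un1 s \<pi>" and q: "q \<in> un1 s \<pi>" and sh: "shares p q"
    obtain x y z w where pq: "p = (x, y)" "q = (z, w)" by (cases p, cases q) auto
    have "(x+1, y+1) \<in> \<pi>" "(z+1, w+1) \<in> \<pi>" using p q I1 unfolding pq by auto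
    moreover have "shares (x+1, y+1) (z+1, w+1)" using sh unfolding pq shares_def by auto
    ultimately have "(x+1, y+1) = (z+1, w+1)" using nc_uniq[OF P] by blast
    then show "p = q" unfolding pq by simp
  next
    fix a b c d assume ab: "(a, b) \<in> un1 s \<pi>" and cd: "(c, d) \<in> un1 s \<pi>"
    have "(a+1, b+1) \<in> \<pi>" "(c+1, d+1) \<in> \<pi>" using ab cd I1 by auto
    then show "\<not> (a < c \<and> c < b \<and> b < d)" using nc_nocross[OF P] by fastforce
  qed
  show "un2 s \<pi> \<in> nc_pairings m"
  proof (rule nc_memI)
    show "un2 s \<pi> \<subseteq> {(r, sa). r < sa \<and> sa < m}"
    proof
      fix p assume "p \<in> un2 s \<pi>"
      then obtain x y where xy: "p = (x, y)" "(x + (s+2), y + (s+2)) \<in> \<pi>" using I2 by (cases p) auto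
      then show "p \<in> {(r, sa). r < sa \<and> sa < m}" using nc_sub[OF P xy(2)] by auto
    qed
  next
    fix i assume i: "i < m"
    then obtain c d where cd: "(c, d) \<in> \<pi>" "c = i + (s+2) \<or> d = i + (s+2)" using nc_cover[OF P, of "i+(s+2)"] by auto
    have "s + 2 \<le> c" using F[OF cd(1)] cd(2) i by auto
    moreover have "c < d" using nc_ord[OF P cd(1)] .
    ultimately have e: "c - (s+2) + (s+2) = c" "d - (s+2) + (s+2) = d" by simp_all
    have "(c - (s+2), d - (s+2)) \<in> un2 s \<pi>" by (subst I2, unfold e) (use cd(1) in auto)
    then show "\<exists>p\<in>un2 s \<pi>. fst p = i \<or> snd p = i" using cd(2) by (intro bexI[of _ "(c-(s+2),d-(s+2))"]) auto
  next
    fix p q assume p: "p \<in> un2 s \<pi>" and q: "q \<in> un2 s \<pi>" and sh: "shares p q"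
    obtain x y z w where pq: "p = (x, y)" "q = (z, w)" by (cases p, cases q) auto
    have "(x+(s+2), y+(s+2)) \<in> \<pi>" "(z+(s+2), w+(s+2)) \<in> \<pi>" using p q I2 unfolding pq by auto
    moreover have "shares (x+(s+2), y+(s+2)) (z+(s+2), w+(s+2))" using sh unfolding pq shares_def by auto
    ultimately have "(x+(s+2), y+(s+2)) = (z+(s+2), w+(s+2))" using nc_uniq[OF P] by blast
    then show "p = q" unfolding pq by simp
  next
    fix a b c d assume ab: "(a, b) \<in> un2 s \<pi>" and cd: "(c, d) \<in> un2 s \<pi>"
    have "(a+(s+2), b+(s+2)) \<in> \<pi>" "(c+(s+2), d+(s+2)) \<in> \<pi>" using ab cd I2 by auto
    then show "\<not> (a < c \<and> c < b \<and> b < d)" using nc_nocross[OF P] by fastforce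
  qed
  show "gl s (un1 s \<pi>, un2 s \<pi>) = \<pi>"
  proof (rule set_eqI)
    fix p :: "nat \<times> nat"
    obtain x y where p: "p = (x, y)" by (cases p)
    show "p \<in> gl s (un1 s \<pi>, un2 s \<pi>) \<longleftrightarrow> p \<in> \<pi>"
    proof
      assume "p \<in> gl s (un1 s \<pi>, un2 s \<pi>)"
      then have "(x = 0 \<and> y = Suc s) \<or> (x, y) \<in> sh 1 (un1 s \<pi>) \<or> (x, y) \<in> sh (s + 2) (un2 s \<pi>)"
        unfolding p gl_iff by simp
      then show "p \<in> \<pi>" unfolding p sh_iff
      proof (elim disjE conjE)
        assume "1 \<le> x" "1 \<le> y" "(x - 1, y - 1) \<in> un1 s \<pi>"
        then show "(x, y) \<in> \<pi>" using I1[of "x - 1" "y - 1"] by simp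
      next
        assume a: "s + 2 \<le> x" "s + 2 \<le> y" "(x - (s+2), y - (s+2)) \<in> un2 s \<pi>"
        then have e: "x - (s+2) + (s+2) = x" "y - (s+2) + (s+2) = y" by simp_all
        have "(x - (s+2) + (s+2), y - (s+2) + (s+2)) \<in> \<pi>" using I2[of "x - (s+2)" "y - (s+2)"] a(3) by blast
        then show "(x, y) \<in> \<pi>" by (simp only: e)
      qed (use z in simp)
    next
      assume "p \<in> \<pi>"
      then have "(x, y) \<in> \<pi>" using p by simp
      note xy = this
      from F[OF this] have "(x, y) \<in> gl s (un1 s \<pi>, un2 s \<pi>)"
      proof (elim disjE conjE)
        assume a: "1 \<le> x" "x < y" "y \<le> s"
        have "(x - 1 + 1, y - 1 + 1) \<in> \<pi>" using a xy by simp
        then have "(x - 1, y - 1) \<in> un1 s \<pi>" using I1[of "x - 1" "y - 1"] a by simp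
        then show ?thesis using a unfolding gl_iff sh_iff by simp
      next
        assume a: "s + 2 \<le> x" "x < y" "y < s + m + 2"
        then have e: "x - (s+2) + (s+2) = x" "y - (s+2) + (s+2) = y" by simp_all
        have "(x - (s+2) + (s+2), y - (s+2) + (s+2)) \<in> \<pi>" unfolding e by (rule xy)
        then have "(x - (s+2), y - (s+2)) \<in> un2 s \<pi>" using I2[of "x - (s+2)" "y - (s+2)"] by blast
        then show ?thesis using a unfolding gl_iff sh_iff by simp
      qed (simp add: gl_iff)
      then show "p \<in> gl s (un1 s \<pi>, un2 s \<pi>)" using p by simp
    qed
  qed
qed

lemma gl_un:
  assumes p1: "\<pi>1 \<in> nc_pairings s" and p2: "\<pi>2 \<in> nc_pairings m"
  shows "un1 s (gl s (\<pi>1, \<pi>2)) = \<pi>1" "un2 s (gl s (\<pi>1, \<pi>2)) = \<pi>2"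
proof -
  have G: "gl s (\<pi>1, \<pi>2) \<in> nc_pairings (s + m + 2)" by (rule gl_mem[OF p1 p2])
  have z: "(0, Suc s) \<in> gl s (\<pi>1, \<pi>2)" unfolding gl_def by simp
  note F = nc_split_fact[OF G z]
  have h1: "\<And>c d. (c, d) \<in> gl s (\<pi>1, \<pi>2) \<Longrightarrow> d \<le> s \<Longrightarrow> 1 \<le> c \<and> c < d"
    using F by fastforce
  note I1 = un1_iff[OF h1]
  note I2 = un2_iff[where \<pi>="gl s (\<pi>1, \<pi>2)" and s=s, OF nc_ord[OF G]]
  show "un1 s (gl s (\<pi>1, \<pi>2)) = \<pi>1"
  proof (rule set_eqI)
    fix p :: "nat \<times> nat"
    obtain x y where p: "p = (x, y)" by (cases p)
    have "(x, y) \<in> \<pi>1 \<Longrightarrow> y < s" using nc_sub[OF p1] by fastforce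
    then show "p \<in> un1 s (gl s (\<pi>1, \<pi>2)) \<longleftrightarrow> p \<in> \<pi>1"
      unfolding p by (subst I1) (auto simp: gl_iff sh_iff)
  qed
  show "un2 s (gl s (\<pi>1, \<pi>2)) = \<pi>2"
  proof (rule set_eqI)
    fix p :: "nat \<times> nat"
    obtain x y where p: "p = (x, y)" by (cases p)
    show "p \<in> un2 s (gl s (\<pi>1, \<pi>2)) \<longleftrightarrow> p \<in> \<pi>2"
      unfolding p using nc_sub[OF p1, of "(Suc (x + s), Suc (y + s))"]
      by (subst I2) (auto simp: gl_iff sh_iff)
  qed
qed


definition FW :: "(int \<Rightarrow> real) \<Rightarrow> int list \<Rightarrow> (nat \<times> nat) set \<Rightarrow> real" where
  "FW \<rho> w \<pi> = (\<Prod>(r, s)\<in>\<pi>. \<rho> (w ! s - w ! r))"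

definition NW :: "(int \<Rightarrow> real) \<Rightarrow> int list \<Rightarrow> real" where
  "NW \<rho> w = (\<Sum>\<pi>\<in>nc_pairings (length w). FW \<rho> w \<pi>)"

lemma nc_zero: "nc_pairings 0 = {{}}" unfolding nc_pairings_def by auto

lemma NW_Nil: "NW \<rho> [] = 1" unfolding NW_def FW_def by (simp add: nc_zero)

lemma inj_sh: "inj_on (\<lambda>(a::nat, b::nat). (a + k, b + k)) A"
  by (auto simp: inj_on_def)

lemma FW_gl:
  assumes p1: "\<pi>1 \<in> nc_pairings s" and p2: "\<pi>2 \<in> nc_pairings m" and len: "length w = s + m + 1"
  shows "FW \<rho> (x # w) (gl s (\<pi>1, \<pi>2)) = \<rho> (w ! s - x) * FW \<rho> (take s w) \<pi>1 * FW \<rho> (drop (Suc s) w) \<pi>2"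
proof -
  have f1: "finite \<pi>1" "finite \<pi>2" using nc_elem_finite p1 p2 by auto
  have A: "(a, b) \<in> \<pi>1 \<Longrightarrow> a < b \<and> b < s" for a b using nc_sub[OF p1] by fastforce
  have B: "(a, b) \<in> \<pi>2 \<Longrightarrow> a < b \<and> b < m" for a b using nc_sub[OF p2] by fastforce
  have d1: "(0, Suc s) \<notin> sh 1 \<pi>1 \<union> sh (s + 2) \<pi>2" unfolding sh_def by auto
  have d2: "sh 1 \<pi>1 \<inter> sh (s + 2) \<pi>2 = {}"
  proof (rule ccontr)
    assume "sh 1 \<pi>1 \<inter> sh (s + 2) \<pi>2 \<noteq> {}"
    then obtain a b where "(a, b) \<in> sh 1 \<pi>1" "(a, b) \<in> sh (s + 2) \<pi>2" by auto
    then show False using A[of "a - 1" "b - 1"] unfolding sh_iff by auto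
  qed
  let ?g = "\<lambda>(r, sa). \<rho> ((x # w) ! sa - (x # w) ! r)"
  have "FW \<rho> (x # w) (gl s (\<pi>1, \<pi>2)) = ?g (0, Suc s) * (prod ?g (sh 1 \<pi>1) * prod ?g (sh (s+2) \<pi>2))"
    unfolding FW_def gl_def fst_conv snd_conv
    using f1 d1 d2 by (simp add: prod.union_disjoint sh_def)
  also have "?g (0, Suc s) = \<rho> (w ! s - x)" by simp
  also have "prod ?g (sh 1 \<pi>1) = FW \<rho> (take s w) \<pi>1"
    unfolding sh_def FW_def
    by (subst prod.reindex[OF inj_sh]) (auto intro!: prod.cong dest!: A simp: len)
  also have "prod ?g (sh (s+2) \<pi>2) = FW \<rho> (drop (Suc s) w) \<pi>2"
    unfolding sh_def FW_def
  proof (subst prod.reindex[OF inj_sh], rule prod.cong)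
    fix p assume "p \<in> \<pi>2"
    then obtain a b where "p = (a, b)" "(a, b) \<in> \<pi>2" by (cases p) auto
    then show "(?g \<circ> (\<lambda>(a, b). (a + (s + 2), b + (s + 2)))) p = (case p of (r, sa) \<Rightarrow> \<rho> (drop (Suc s) w ! sa - drop (Suc s) w ! r))"
      using B[of a b] len by (simp add: nth_drop add.commute)
  qed simp
  finally show ?thesis by simp
qed


lemma NW_block:
  assumes sn: "s < length w"
  shows "(\<Sum>\<pi>\<in>{\<pi> \<in> nc_pairings (Suc (length w)). (0, Suc s) \<in> \<pi>}. FW \<rho> (x # w) \<pi>)
       = \<rho> (w ! s - x) * NW \<rho> (take s w) * NW \<rho> (drop (Suc s) w)"
proof -
  define m where "m = length w - Suc s"
  have nm: "Suc (length w) = s + m + 2" "length w = s + m + 1" using sn unfolding m_def by auto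
  have im: "{\<pi> \<in> nc_pairings (Suc (length w)). (0, Suc s) \<in> \<pi>} = gl s ` (nc_pairings s \<times> nc_pairings m)"
  proof
    show "{\<pi> \<in> nc_pairings (Suc (length w)). (0, Suc s) \<in> \<pi>} \<subseteq> gl s ` (nc_pairings s \<times> nc_pairings m)"
    proof
      fix \<pi> assume "\<pi> \<in> {\<pi> \<in> nc_pairings (Suc (length w)). (0, Suc s) \<in> \<pi>}"
      then have P: "\<pi> \<in> nc_pairings (s + m + 2)" and z: "(0, Suc s) \<in> \<pi>" using nm by auto
      show "\<pi> \<in> gl s ` (nc_pairings s \<times> nc_pairings m)"
        using un_mem[OF P z] by (intro image_eqI[of _ _ "(un1 s \<pi>, un2 s \<pi>)"]) auto
    qed
  next
    show "gl s ` (nc_pairings s \<times> nc_pairings m) \<subseteq> {\<pi> \<in> nc_pairings (Suc (length w)). (0, Suc s) \<in> \<pi>}"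
    proof
      fix \<pi> assume "\<pi> \<in> gl s ` (nc_pairings s \<times> nc_pairings m)"
      then obtain a b where ab: "a \<in> nc_pairings s" "b \<in> nc_pairings m" "\<pi> = gl s (a, b)" by auto
      show "\<pi> \<in> {\<pi> \<in> nc_pairings (Suc (length w)). (0, Suc s) \<in> \<pi>}"
        using gl_mem[OF ab(1,2)] nm(1) unfolding ab(3) by (simp add: gl_def)
    qed
  qed
  have inj: "inj_on (gl s) (nc_pairings s \<times> nc_pairings m)"
  proof (rule inj_onI)
    fix p q assume "p \<in> nc_pairings s \<times> nc_pairings m" "q \<in> nc_pairings s \<times> nc_pairings m" "gl s p = gl s q"
    moreover obtain a b c d where pq: "p = (a, b)" "q = (c, d)" by (cases p, cases q) auto
    ultimately have "a \<in> nc_pairings s" "b \<in> nc_pairings m" "c \<in> nc_pairings s" "d \<in> nc_pairings m"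
      "gl s (a, b) = gl s (c, d)" by auto
    then have "un1 s (gl s (a, b)) = un1 s (gl s (c, d))" "un2 s (gl s (a, b)) = un2 s (gl s (c, d))" by simp_all
    then show "p = q" unfolding pq using gl_un \<open>a \<in> nc_pairings s\<close> \<open>b \<in> nc_pairings m\<close>
      \<open>c \<in> nc_pairings s\<close> \<open>d \<in> nc_pairings m\<close> by simp
  qed
  have "(\<Sum>\<pi>\<in>{\<pi> \<in> nc_pairings (Suc (length w)). (0, Suc s) \<in> \<pi>}. FW \<rho> (x # w) \<pi>)
      = (\<Sum>p\<in>nc_pairings s \<times> nc_pairings m. FW \<rho> (x # w) (gl s p))"
    unfolding im by (subst sum.reindex[OF inj]) simp
  also have "\<dots> = (\<Sum>p\<in>nc_pairings s \<times> nc_pairings m. \<rho> (w ! s - x) * FW \<rho> (take s w) (fst p) * FW \<rho> (drop (Suc s) w) (snd p))"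
  proof (rule sum.cong)
    fix p assume "p \<in> nc_pairings s \<times> nc_pairings m"
    then obtain a b where "p = (a, b)" "a \<in> nc_pairings s" "b \<in> nc_pairings m" by auto
    then show "FW \<rho> (x # w) (gl s p) = \<rho> (w ! s - x) * FW \<rho> (take s w) (fst p) * FW \<rho> (drop (Suc s) w) (snd p)"
      using FW_gl[OF _ _ nm(2)] by simp
  qed simp
  also have "\<dots> = (\<Sum>\<pi>1\<in>nc_pairings s. \<Sum>\<pi>2\<in>nc_pairings m. \<rho> (w ! s - x) * FW \<rho> (take s w) \<pi>1 * FW \<rho> (drop (Suc s) w) \<pi>2)"
    by (subst sum.cartesian_product) (simp add: case_prod_beta)
  also have "\<dots> = (\<Sum>\<pi>1\<in>nc_pairings s. (\<rho> (w ! s - x) * FW \<rho> (take s w) \<pi>1) * (\<Sum>\<pi>2\<in>nc_pairings m. FW \<rho> (drop (Suc s) w) \<pi>2))"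
    by (simp add: sum_distrib_left)
  also have "\<dots> = (\<Sum>\<pi>1\<in>nc_pairings s. \<rho> (w ! s - x) * FW \<rho> (take s w) \<pi>1) * (\<Sum>\<pi>2\<in>nc_pairings m. FW \<rho> (drop (Suc s) w) \<pi>2)"
    by (simp add: sum_distrib_right)
  also have "\<dots> = \<rho> (w ! s - x) * ((\<Sum>\<pi>1\<in>nc_pairings s. FW \<rho> (take s w) \<pi>1) * (\<Sum>\<pi>2\<in>nc_pairings m. FW \<rho> (drop (Suc s) w) \<pi>2))"
  proof -
    have h: "(\<Sum>\<pi>1\<in>nc_pairings s. \<rho> (w ! s - x) * FW \<rho> (take s w) \<pi>1) = \<rho> (w ! s - x) * (\<Sum>\<pi>1\<in>nc_pairings s. FW \<rho> (take s w) \<pi>1)"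
      by (simp add: sum_distrib_left)
    show ?thesis by (simp only: h mult.assoc)
  qed
  also have "\<dots> = \<rho> (w ! s - x) * NW \<rho> (take s w) * NW \<rho> (drop (Suc s) w)"
  proof -
    have l: "length (take s w) = s" "length (drop (Suc s) w) = m" using sn by (simp_all add: m_def)
    show ?thesis by (simp only: NW_def l)
  qed
  finally show ?thesis .
qed

lemma NW_Cons:
  "NW \<rho> (x # w) = (\<Sum>s<length w. \<rho> (w ! s - x) * NW \<rho> (take s w) * NW \<rho> (drop (Suc s) w))"
proof -
  let ?n = "length w"
  define B where "B s = {\<pi> \<in> nc_pairings (Suc ?n). (0, Suc s) \<in> \<pi>}" for s
  have U: "nc_pairings (Suc ?n) = (\<Union>s\<in>{..<?n}. B s)"
  proof
    show "nc_pairings (Suc ?n) \<subseteq> (\<Union>s\<in>{..<?n}. B s)"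
    proof
      fix \<pi> assume P: "\<pi> \<in> nc_pairings (Suc ?n)"
      then obtain p where p: "p \<in> \<pi>" "fst p = 0 \<or> snd p = 0" using nc_cover[OF P, of 0] by auto
      have o: "fst p < snd p" "snd p < Suc ?n" using nc_sub[OF P p(1)] by auto
      then have "fst p = 0" using p(2) by auto
      then have "p = (0, Suc (snd p - 1))" using o by (cases p) auto
      then show "\<pi> \<in> (\<Union>s\<in>{..<?n}. B s)" unfolding B_def using P p(1) o
        by (intro UN_I[of "snd p - 1"]) auto
    qed
  qed (auto simp: B_def)
  have D: "\<forall>i\<in>{..<?n}. \<forall>j\<in>{..<?n}. i \<noteq> j \<longrightarrow> B i \<inter> B j = {}"
  proof (intro ballI impI)
    fix i j :: nat assume "i \<noteq> j"
    show "B i \<inter> B j = {}"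
    proof (rule ccontr)
      assume "B i \<inter> B j \<noteq> {}"
      then obtain \<pi> where P: "\<pi> \<in> nc_pairings (Suc ?n)" and z: "(0, Suc i) \<in> \<pi>" "(0, Suc j) \<in> \<pi>" unfolding B_def by auto
      have "shares (0, Suc i) (0, Suc j)" unfolding shares_def by simp
      then have "(0, Suc i) = (0, Suc j)" using nc_uniq[OF P z] by blast
      then show False using \<open>i \<noteq> j\<close> by simp
    qed
  qed
  have F: "\<forall>i\<in>{..<?n}. finite (B i)" unfolding B_def using nc_finite_set by auto
  have "NW \<rho> (x # w) = (\<Sum>\<pi>\<in>(\<Union>s\<in>{..<?n}. B s). FW \<rho> (x # w) \<pi>)"
    unfolding NW_def using U by simp
  also have "\<dots> = (\<Sum>s<?n. \<Sum>\<pi>\<in>B s. FW \<rho> (x # w) \<pi>)"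
    by (rule sum.UNION_disjoint[OF _ F D]) simp
  also have "\<dots> = (\<Sum>s<?n. \<rho> (w ! s - x) * NW \<rho> (take s w) * NW \<rho> (drop (Suc s) w))"
    unfolding B_def by (rule sum.cong) (auto intro: NW_block)
  finally show ?thesis .
qed



lemma tri_reindex:
  fixes G :: "nat \<Rightarrow> nat \<Rightarrow> 'a::comm_monoid_add"
  shows "(\<Sum>s<L. \<Sum>q<s. G q s) = (\<Sum>q<L. \<Sum>p<L - Suc q. G q (Suc q + p))"
proof (induction L)
  case 0 then show ?case by simp
next
  case (Suc L)
  have "(\<Sum>q<Suc L. \<Sum>p<Suc L - Suc q. G q (Suc q + p))
      = (\<Sum>q<L. \<Sum>p<Suc L - Suc q. G q (Suc q + p))" by simp
  also have "\<dots> = (\<Sum>q<L. (\<Sum>p<L - Suc q. G q (Suc q + p)) + G q L)"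
  proof (rule sum.cong)
    fix q assume "q \<in> {..<L}"
    then have e: "Suc L - Suc q = Suc (L - Suc q)" and e2: "Suc (q + (L - Suc q)) = L" by auto
    show "(\<Sum>p<Suc L - Suc q. G q (Suc q + p)) = (\<Sum>p<L - Suc q. G q (Suc q + p)) + G q L"
      unfolding e by (simp add: e2)
  qed simp
  also have "\<dots> = (\<Sum>q<L. \<Sum>p<L - Suc q. G q (Suc q + p)) + (\<Sum>q<L. G q L)"
    by (simp add: sum.distrib)
  finally show ?case using Suc by simp
qed

fun VW :: "(int \<Rightarrow> real) \<Rightarrow> nat \<Rightarrow> int \<Rightarrow> int list \<Rightarrow> real" where
  "VW \<rho> 0 a w = NW \<rho> w"
| "VW \<rho> (Suc n) a w = (\<Sum>s<length w. \<rho> (w ! s - a) * NW \<rho> (take s w) * VW \<rho> n a (drop (Suc s) w))"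

lemma VW_one: "VW \<rho> (Suc 0) a w = NW \<rho> (a # w)"
  by (simp add: NW_Cons)

lemma VW_key:
  assumes r0: "\<rho> 0 = 1"
  shows "VW \<rho> (Suc n) a (a # w) = VW \<rho> (Suc (Suc n)) a w + VW \<rho> n a w"
proof -
  let ?L = "length w"
  define G where "G q s = \<rho> (w ! s - a) * (\<rho> (w ! q - a) * NW \<rho> (take q w) * NW \<rho> (drop (Suc q) (take s w)))
       * VW \<rho> n a (drop (Suc s) w)" for q s
  have "VW \<rho> (Suc n) a (a # w) = (\<Sum>s<Suc ?L. \<rho> ((a # w) ! s - a) * NW \<rho> (take s (a # w)) * VW \<rho> n a (drop (Suc s) (a # w)))"
    by simp
  also have "\<dots> = VW \<rho> n a w + (\<Sum>s<?L. \<rho> (w ! s - a) * NW \<rho> (a # take s w) * VW \<rho> n a (drop (Suc s) w))"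
    by (subst sum.lessThan_Suc_shift) (simp add: r0 NW_Nil)
  also have "(\<Sum>s<?L. \<rho> (w ! s - a) * NW \<rho> (a # take s w) * VW \<rho> n a (drop (Suc s) w)) = (\<Sum>s<?L. \<Sum>q<s. G q s)"
  proof (rule sum.cong)
    fix s assume "s \<in> {..<?L}"
    then have sl: "s < ?L" by simp
    have "NW \<rho> (a # take s w) = (\<Sum>q<s. \<rho> (w ! q - a) * NW \<rho> (take q w) * NW \<rho> (drop (Suc q) (take s w)))"
      unfolding NW_Cons using sl by (intro sum.cong) (auto simp: min_def)
    then show "\<rho> (w ! s - a) * NW \<rho> (a # take s w) * VW \<rho> n a (drop (Suc s) w) = (\<Sum>q<s. G q s)"
      unfolding G_def by (simp add: sum_distrib_left sum_distrib_right)
  qed simp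
  also have "\<dots> = (\<Sum>q<?L. \<Sum>p<?L - Suc q. G q (Suc q + p))" by (rule tri_reindex)
  also have "\<dots> = (\<Sum>q<?L. \<rho> (w ! q - a) * NW \<rho> (take q w) * VW \<rho> (Suc n) a (drop (Suc q) w))"
  proof (rule sum.cong)
    fix q assume "q \<in> {..<?L}"
    then have ql: "q < ?L" by simp
    have "(\<Sum>p<?L - Suc q. G q (Suc q + p)) = \<rho> (w ! q - a) * NW \<rho> (take q w) *
      (\<Sum>p<?L - Suc q. \<rho> (drop (Suc q) w ! p - a) * NW \<rho> (take p (drop (Suc q) w)) * VW \<rho> n a (drop (Suc p) (drop (Suc q) w)))"
      unfolding sum_distrib_left
    proof (rule sum.cong)
      fix p assume "p \<in> {..<?L - Suc q}"
      then have pl: "Suc q + p < ?L" by simp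
      have e1: "drop (Suc q) w ! p = w ! (Suc q + p)" using ql by (simp add: nth_drop)
      have e2: "take p (drop (Suc q) w) = drop (Suc q) (take (Suc q + p) w)" by (simp add: take_drop add.commute)
      have e3: "drop (Suc p) (drop (Suc q) w) = drop (Suc (Suc q + p)) w" by (simp add: add.commute)
      show "G q (Suc q + p) = \<rho> (w ! q - a) * NW \<rho> (take q w) *
         (\<rho> (drop (Suc q) w ! p - a) * NW \<rho> (take p (drop (Suc q) w)) * VW \<rho> n a (drop (Suc p) (drop (Suc q) w)))"
        unfolding e1 e2 e3 G_def by (simp add: ac_simps)
    qed simp
    also have "\<dots> = \<rho> (w ! q - a) * NW \<rho> (take q w) * VW \<rho> (Suc n) a (drop (Suc q) w)"
      using ql by simp
    finally show "(\<Sum>p<?L - Suc q. G q (Suc q + p)) = \<rho> (w ! q - a) * NW \<rho> (take q w) * VW \<rho> (Suc n) a (drop (Suc q) w)" .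
  qed simp
  also have "\<dots> = VW \<rho> (Suc (Suc n)) a w" by (simp only: VW.simps(2))
  finally show ?thesis by simp
qed



fun chebC :: "nat \<Rightarrow> (nat \<Rightarrow> 'b::ab_group_add) \<Rightarrow> 'b" where
  "chebC 0 f = f 0"
| "chebC (Suc 0) f = f 1"
| "chebC (Suc (Suc m)) f = chebC (Suc m) (\<lambda>j. f (Suc j)) - chebC m f"

lemma chebC_add: "chebC m (\<lambda>j. f j + g j) = chebC m f + chebC m g"
proof (induction m f arbitrary: g rule: chebC.induct)
  case (3 m f)
  have a: "chebC (Suc m) (\<lambda>j. f (Suc j) + g (Suc j)) = chebC (Suc m) (\<lambda>j. f (Suc j)) + chebC (Suc m) (\<lambda>j. g (Suc j))"
    using "3.IH"(1)[of "\<lambda>j. g (Suc j)"] by simp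
  show ?case using a "3.IH"(2)[of g] by (simp add: algebra_simps)
qed simp_all

lemma chebC_mult: "chebC m (\<lambda>j. (c::'b::ring) * f j) = c * chebC m f"
  by (induction m f rule: chebC.induct) (simp_all add: algebra_simps)

lemma chebC_of_real: "chebC m (\<lambda>j. of_real (f j) :: 'b::real_normed_algebra_1) = of_real (chebC m f)"
  by (induction m f rule: chebC.induct) simp_all

lemma VW_rep_shift:
  assumes r0: "\<rho> 0 = 1"
  shows "VW \<rho> n a (replicate j t) = \<rho> (t - a) ^ n * VW \<rho> n t (replicate j t)"
proof (induction n arbitrary: j)
  case 0 then show ?case by simp
next
  case (Suc n)
  show ?case
    by (simp add: VW.simps(2) Suc r0 sum_distrib_left min_def ac_simps)
qed

declare VW.simps(2)[simp del]

lemma VW_ortho: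
  assumes r0: "\<rho> 0 = 1"
  shows "chebC m (\<lambda>j. VW \<rho> n t (replicate j t)) = (if n = m then 1 else 0)"
proof (induction m arbitrary: n rule: less_induct)
  case (less m)
  have b0: "VW \<rho> n t [] = (if n = 0 then 1 else 0)" for n
    by (cases n) (simp_all add: NW_Nil VW.simps(2))
  have s0: "VW \<rho> 0 t (replicate (Suc j) t) = VW \<rho> 1 t (replicate j t)" for j
    by (simp only: replicate_Suc VW.simps(1) One_nat_def VW_one)
  have sS: "VW \<rho> (Suc n) t (replicate (Suc j) t) = VW \<rho> (Suc (Suc n)) t (replicate j t) + VW \<rho> n t (replicate j t)" for n j
    using VW_key[of \<rho> n t "replicate j t", OF r0] by simp
  consider "m = 0" | "m = 1" | m' where "m = Suc (Suc m')" by (metis One_nat_def nat.exhaust)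
  then show ?case
  proof cases
    case 1 then show ?thesis by (simp add: b0)
  next
    case 2
    show ?thesis
    proof (cases n)
      case 0 then show ?thesis using 2 s0[of 0] b0[of 1] by simp
    next
      case (Suc n') then show ?thesis using 2 sS[of n' 0] b0 by simp
    qed
  next
    case 3
    have IH1: "chebC (Suc m') (\<lambda>j. VW \<rho> k t (replicate j t)) = (if k = Suc m' then 1 else 0)" for k
      using less 3 by simp
    have IH2: "chebC m' (\<lambda>j. VW \<rho> k t (replicate j t)) = (if k = m' then 1 else 0)" for k
      using less 3 by simp
    have "chebC m (\<lambda>j. VW \<rho> n t (replicate j t)) =
        chebC (Suc m') (\<lambda>j. VW \<rho> n t (replicate (Suc j) t)) - (if n = m' then 1 else 0)"
      using 3 IH2 by simp
    also have "chebC (Suc m') (\<lambda>j. VW \<rho> n t (replicate (Suc j) t)) =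
        (if n = 0 then (if Suc m' = 1 then 1 else 0) else (if Suc (Suc (n - 1)) = Suc m' then 1 else 0) + (if n - 1 = Suc m' then 1 else 0))"
    proof (cases n)
      case 0 then show ?thesis using IH1[of 1] s0 by simp
    next
      case (Suc n')
      have "(\<lambda>j. VW \<rho> n t (replicate (Suc j) t)) = (\<lambda>j. VW \<rho> (Suc (Suc n')) t (replicate j t) + VW \<rho> n' t (replicate j t))"
        unfolding Suc by (intro ext) (rule sS)
      then have "chebC (Suc m') (\<lambda>j. VW \<rho> n t (replicate (Suc j) t)) = chebC (Suc m') (\<lambda>j. VW \<rho> (Suc (Suc n')) t (replicate j t) + VW \<rho> n' t (replicate j t))"
        by (rule arg_cong)
      also have "\<dots> = chebC (Suc m') (\<lambda>j. VW \<rho> (Suc (Suc n')) t (replicate j t)) + chebC (Suc m') (\<lambda>j. VW \<rho> n' t (replicate j t))"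
        by (rule chebC_add)
      finally show ?thesis unfolding IH1 using Suc by simp
    qed
    finally show ?thesis using 3 by auto
  qed
qed



context
  fixes sc :: "complex \<Rightarrow> 'a::ring_1 \<Rightarrow> 'a" and st :: "'a \<Rightarrow> 'a" and \<phi> :: "'a \<Rightarrow> complex"
  assumes SP: "star_prob_space sc st \<phi>"
begin

lemma phi_add: "\<phi> (x + y) = \<phi> x + \<phi> y" using SP unfolding star_prob_space_def by blast
lemma phi_sc: "\<phi> (sc a x) = a * \<phi> x" using SP unfolding star_prob_space_def by blast
lemma sc_ml: "sc a x * y = sc a (x * y)"
proof -
  have h: "\<forall>a x y. sc a (x * y) = sc a x * y" using SP unfolding star_prob_space_def by blast
  show ?thesis using h by simp
qed
lemma sc_mr: "x * sc a y = sc a (x * y)"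
proof -
  have h: "\<forall>a x y. sc a (x * y) = x * sc a y" using SP unfolding star_prob_space_def by blast
  show ?thesis using h by simp
qed
lemma phi_0: "\<phi> 0 = 0" using phi_add[of 0 0] by simp
lemma phi_minus: "\<phi> (- x) = - \<phi> x" using phi_add[of x "- x"] phi_0 by (simp add: eq_neg_iff_add_eq_0 add.commute)
lemma phi_diff: "\<phi> (x - y) = \<phi> x - \<phi> y" using phi_add[of x "- y"] phi_minus[of y] by simp
lemma phi_sum: "\<phi> (\<Sum>i\<in>A. f i) = (\<Sum>i\<in>A. \<phi> (f i))"
  by (induction A rule: infinite_finite_induct) (simp_all add: phi_0 phi_add)

lemma chebU_comm: "x * chebU n x = chebU n x * (x::'b::ring_1)"
proof (induction n x rule: chebU.induct)
  case (3 n x)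
  have "x * chebU (Suc (Suc n)) x = x * (x * chebU (Suc n) x) - x * chebU n x"
    by (simp add: right_diff_distrib)
  also have "\<dots> = x * (chebU (Suc n) x * x) - chebU n x * x" using 3 by simp
  also have "\<dots> = (x * chebU (Suc n) x - chebU n x) * x" by (simp add: left_diff_distrib mult.assoc)
  finally show ?case by simp
qed simp_all

lemma phi_right: "\<phi> (Y * chebU m x) = chebC m (\<lambda>j. \<phi> (Y * x ^ j))"
proof (induction m arbitrary: Y rule: less_induct)
  case (less m)
  consider "m = 0" | "m = 1" | m' where "m = Suc (Suc m')" by (metis One_nat_def nat.exhaust)
  then show ?case
  proof cases
    case 3
    have "Y * chebU m x = (Y * x) * chebU (Suc m') x - Y * chebU m' x"
      unfolding 3 by (simp add: algebra_simps)
    then have "\<phi> (Y * chebU m x) = \<phi> ((Y * x) * chebU (Suc m') x) - \<phi> (Y * chebU m' x)"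
      by (simp add: phi_diff)
    also have "\<dots> = chebC (Suc m') (\<lambda>j. \<phi> ((Y * x) * x ^ j)) - chebC m' (\<lambda>j. \<phi> (Y * x ^ j))"
      using less 3 by simp
    also have "(\<lambda>j. \<phi> ((Y * x) * x ^ j)) = (\<lambda>j. \<phi> (Y * x ^ Suc j))"
      by (simp add: mult.assoc)
    finally show ?thesis unfolding 3 by simp
  qed simp_all
qed

context
  fixes X :: "int \<Rightarrow> 'a" and \<rho> :: "int \<Rightarrow> real"
  assumes SS: "stationary_std_semicircular sc st \<phi> X \<rho>"
begin

lemma r0: "\<rho> 0 = 1" using SS unfolding stationary_std_semicircular_def by blast

lemma phi_word: "\<phi> (prod_list (map X w)) = of_real (NW \<rho> w)"
  using SS unfolding stationary_std_semicircular_def NW_def FW_def by blast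

lemma phi_left: "\<phi> (chebU n (X a) * prod_list (map X w)) = of_real (VW \<rho> n a w)"
proof (induction n arbitrary: w rule: less_induct)
  case (less n)
  consider "n = 0" | "n = 1" | n' where "n = Suc (Suc n')" by (metis One_nat_def nat.exhaust)
  then show ?case
  proof cases
    case 1 then show ?thesis by (simp add: phi_word)
  next
    case 2
    have "\<phi> (chebU n (X a) * prod_list (map X w)) = \<phi> (prod_list (map X (a # w)))" using 2 by simp
    then show ?thesis using 2 phi_word[of "a # w"] by (simp add: VW_one)
  next
    case 3
    have "chebU n (X a) * prod_list (map X w) = chebU (Suc n') (X a) * prod_list (map X (a # w)) - chebU n' (X a) * prod_list (map X w)"
      unfolding 3 by (simp add: chebU_comm left_diff_distrib mult.assoc)
    then have "\<phi> (chebU n (X a) * prod_list (map X w)) = of_real (VW \<rho> (Suc n') a (a # w)) - of_real (VW \<rho> n' a w)"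
      using less.IH[of "Suc n'" "a # w"] less.IH[of n' w] 3 by (simp add: phi_diff)
    also have "\<dots> = of_real (VW \<rho> n a w)" unfolding 3 VW_key[of \<rho>, OF r0] by simp
    finally show ?thesis .
  qed
qed

lemma phi_UU: "\<phi> (chebU n (X 0) * chebU m (X t)) = of_real (\<rho> t ^ n * (if n = m then 1 else 0))"
proof -
  have "\<phi> (chebU n (X 0) * chebU m (X t)) = chebC m (\<lambda>j. \<phi> (chebU n (X 0) * X t ^ j))"
    by (rule phi_right)
  also have "(\<lambda>j. \<phi> (chebU n (X 0) * X t ^ j)) = (\<lambda>j. of_real (\<rho> t ^ n * VW \<rho> n t (replicate j t)))"
  proof
    fix j
    have "X t ^ j = prod_list (map X (replicate j t))" by simp
    then show "\<phi> (chebU n (X 0) * X t ^ j) = of_real (\<rho> t ^ n * VW \<rho> n t (replicate j t))"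
      using phi_left[of n 0 "replicate j t"] VW_rep_shift[of \<rho> n 0 j t, OF r0] by simp
  qed
  also have "chebC m (\<lambda>j. of_real (\<rho> t ^ n * VW \<rho> n t (replicate j t)) :: complex) = of_real (\<rho> t ^ n * chebC m (\<lambda>j. VW \<rho> n t (replicate j t)))"
    by (simp only: chebC_of_real chebC_mult)
  also have "\<dots> = of_real (\<rho> t ^ n * (if n = m then 1 else 0))" by (simp only: VW_ortho[of \<rho>, OF r0])
  finally show ?thesis .
qed

lemma part1:
  assumes rk: "cheb_rank c K k"
  shows "\<phi> (cheb_eval sc c K (X 0) * cheb_eval sc c K (X t)) = complex_of_real (\<Sum>j=k..K. (c j)\<^sup>2 * (\<rho> t) ^ j)"
proof -
  have "cheb_eval sc c K (X 0) * cheb_eval sc c K (X t) =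
      (\<Sum>n=1..K. \<Sum>m=1..K. sc (of_real (c m)) (sc (of_real (c n)) (chebU n (X 0) * chebU m (X t))))"
    unfolding cheb_eval_def sum_product by (simp add: sc_ml sc_mr)
  then have "\<phi> (cheb_eval sc c K (X 0) * cheb_eval sc c K (X t)) =
      (\<Sum>n=1..K. \<Sum>m=1..K. of_real (c m) * (of_real (c n) * of_real (\<rho> t ^ n * (if n = m then 1 else 0))))"
    by (simp add: phi_sum phi_sc phi_UU)
  also have "\<dots> = (\<Sum>n=1..K. of_real ((c n)\<^sup>2 * \<rho> t ^ n))"
  proof (rule sum.cong)
    fix n assume n: "n \<in> {1..K}"
    have "(\<Sum>m=1..K. complex_of_real (c m) * (complex_of_real (c n) * complex_of_real (\<rho> t ^ n * (if n = m then 1 else 0))))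
       = (\<Sum>m\<in>{1..K}. if m = n then complex_of_real (c m) * (complex_of_real (c n) * complex_of_real (\<rho> t ^ n)) else 0)"
      by (rule sum.cong) auto
    also have "\<dots> = of_real ((c n)\<^sup>2 * \<rho> t ^ n)" using n by (simp add: power2_eq_square)
    finally show "(\<Sum>m=1..K. complex_of_real (c m) * (complex_of_real (c n) * complex_of_real (\<rho> t ^ n * (if n = m then 1 else 0))))
       = of_real ((c n)\<^sup>2 * \<rho> t ^ n)" .
  qed simp
  also have "\<dots> = of_real (\<Sum>n=1..K. (c n)\<^sup>2 * \<rho> t ^ n)" by simp
  also have "(\<Sum>n=1..K. (c n)\<^sup>2 * \<rho> t ^ n) = (\<Sum>n=k..K. (c n)\<^sup>2 * \<rho> t ^ n)"
  proof (rule sum.mono_neutral_right)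
    show "{k..K} \<subseteq> {1..K}" using rk unfolding cheb_rank_def by auto
    show "\<forall>i\<in>{1..K} - {k..K}. (c i)\<^sup>2 * \<rho> t ^ i = 0" using rk unfolding cheb_rank_def by auto
  qed simp
  finally show ?thesis .
qed

end

end



lemma summable_cofin_compare:
  fixes f g :: "int \<Rightarrow> real"
  assumes fs: "f summable_on UNIV" and E: "finite E" and C: "C \<ge> 0"
    and le: "\<And>n. n \<notin> E \<Longrightarrow> g n \<le> C * f n" and g0: "\<And>n. 0 \<le> g n"
  shows "g summable_on UNIV"
proof -
  have "f summable_on (UNIV - E)" using summable_on_cofin_subset[OF fs E] .
  then have "(\<lambda>n. C * f n) summable_on (UNIV - E)" by (rule summable_on_cmult_right)
  then have "g summable_on (UNIV - E)"
    by (rule summable_on_comparison_test) (use le g0 in auto)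
  moreover have "g summable_on E" using E by simp
  ultimately have "g summable_on ((UNIV - E) \<union> E)" by (rule summable_on_union)
  then show ?thesis by simp
qed

lemma finite_big:
  fixes \<rho> :: "int \<Rightarrow> real"
  assumes t: "(\<rho> \<longlongrightarrow> 0) at_top" and b: "(\<rho> \<longlongrightarrow> 0) at_bot" and d: "\<delta> > 0"
  shows "finite {n. \<not> \<bar>\<rho> n\<bar> \<le> \<delta>}"
proof -
  have "eventually (\<lambda>n. dist (\<rho> n) 0 < \<delta>) at_top" using tendstoD[OF t d] .
  then obtain N where N: "\<And>n. n \<ge> N \<Longrightarrow> dist (\<rho> n) 0 < \<delta>" unfolding eventually_at_top_linorder by blast
  have "eventually (\<lambda>n. dist (\<rho> n) 0 < \<delta>) at_bot" using tendstoD[OF b d] .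
  then obtain M where M: "\<And>n. n \<le> M \<Longrightarrow> dist (\<rho> n) 0 < \<delta>" unfolding eventually_at_bot_linorder by blast
  have "{n. \<not> \<bar>\<rho> n\<bar> \<le> \<delta>} \<subseteq> {M..N}"
  proof
    fix n assume "n \<in> {n. \<not> \<bar>\<rho> n\<bar> \<le> \<delta>}"
    then have "\<not> dist (\<rho> n) 0 < \<delta>" by (simp add: dist_real_def)
    then show "n \<in> {M..N}" using M[of n] N[of n] by force
  qed
  then show ?thesis by (rule finite_subset) simp
qed

lemma poly_bounds:
  fixes c :: "nat \<Rightarrow> real"
  assumes kK: "k \<le> K" and ck: "c k \<noteq> 0"
  defines "H \<equiv> (\<Sum>j=Suc k..K. (c j)\<^sup>2)"
  assumes y: "\<bar>y\<bar> \<le> 1" "H * \<bar>y\<bar> \<le> (c k)\<^sup>2 / 2"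
  shows "\<bar>\<Sum>j=k..K. (c j)\<^sup>2 * y ^ j\<bar> \<le> ((c k)\<^sup>2 + H) * \<bar>y\<bar> ^ k"
    and "(c k)\<^sup>2 / 2 * \<bar>y\<bar> ^ k \<le> \<bar>\<Sum>j=k..K. (c j)\<^sup>2 * y ^ j\<bar>"
proof -
  have split: "(\<Sum>j=k..K. (c j)\<^sup>2 * y ^ j) = (c k)\<^sup>2 * y ^ k + (\<Sum>j=Suc k..K. (c j)\<^sup>2 * y ^ j)"
    using kK by (simp add: sum.atLeast_Suc_atMost)
  have R: "\<bar>\<Sum>j=Suc k..K. (c j)\<^sup>2 * y ^ j\<bar> \<le> H * \<bar>y\<bar> ^ Suc k"
  proof -
    have "\<bar>\<Sum>j=Suc k..K. (c j)\<^sup>2 * y ^ j\<bar> \<le> (\<Sum>j=Suc k..K. \<bar>(c j)\<^sup>2 * y ^ j\<bar>)" by (rule sum_abs)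
    also have "\<dots> \<le> (\<Sum>j=Suc k..K. (c j)\<^sup>2 * \<bar>y\<bar> ^ Suc k)"
    proof (rule sum_mono)
      fix j assume "j \<in> {Suc k..K}"
      then have "\<bar>y\<bar> ^ j \<le> \<bar>y\<bar> ^ Suc k" using y(1) by (intro power_decreasing) auto
      then show "\<bar>(c j)\<^sup>2 * y ^ j\<bar> \<le> (c j)\<^sup>2 * \<bar>y\<bar> ^ Suc k"
        by (simp add: abs_mult power_abs mult_left_mono)
    qed
    also have "\<dots> = H * \<bar>y\<bar> ^ Suc k" unfolding H_def by (simp add: sum_distrib_right)
    finally show ?thesis .
  qed
  have H0: "H \<ge> 0" unfolding H_def by (intro sum_nonneg) simp
  have yk: "\<bar>y\<bar> ^ Suc k \<le> \<bar>y\<bar> ^ k" using y(1) by (intro power_decreasing) auto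
  have "\<bar>\<Sum>j=k..K. (c j)\<^sup>2 * y ^ j\<bar> \<le> \<bar>(c k)\<^sup>2 * y ^ k\<bar> + \<bar>\<Sum>j=Suc k..K. (c j)\<^sup>2 * y ^ j\<bar>"
    unfolding split by (rule abs_triangle_ineq)
  also have "\<dots> \<le> (c k)\<^sup>2 * \<bar>y\<bar> ^ k + H * \<bar>y\<bar> ^ k"
    using R mult_left_mono[OF yk H0] by (simp add: abs_mult power_abs)
  finally show "\<bar>\<Sum>j=k..K. (c j)\<^sup>2 * y ^ j\<bar> \<le> ((c k)\<^sup>2 + H) * \<bar>y\<bar> ^ k" by (simp add: algebra_simps)
  have "H * \<bar>y\<bar> ^ Suc k = (H * \<bar>y\<bar>) * \<bar>y\<bar> ^ k" by simp
  also have "\<dots> \<le> (c k)\<^sup>2 / 2 * \<bar>y\<bar> ^ k" using y(2) by (intro mult_right_mono) auto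
  finally have R2: "H * \<bar>y\<bar> ^ Suc k \<le> (c k)\<^sup>2 / 2 * \<bar>y\<bar> ^ k" .
  have "(c k)\<^sup>2 / 2 * \<bar>y\<bar> ^ k = \<bar>(c k)\<^sup>2 * y ^ k\<bar> - (c k)\<^sup>2 / 2 * \<bar>y\<bar> ^ k"
    by (simp add: abs_mult power_abs)
  also have "\<dots> \<le> \<bar>(c k)\<^sup>2 * y ^ k\<bar> - \<bar>\<Sum>j=Suc k..K. (c j)\<^sup>2 * y ^ j\<bar>" using R R2 by linarith
  also have "\<dots> \<le> \<bar>\<Sum>j=k..K. (c j)\<^sup>2 * y ^ j\<bar>" unfolding split by (smt (verit))
  finally show "(c k)\<^sup>2 / 2 * \<bar>y\<bar> ^ k \<le> \<bar>\<Sum>j=k..K. (c j)\<^sup>2 * y ^ j\<bar>" .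
qed


lemma part2:
  fixes \<rho> :: "int \<Rightarrow> real" and c :: "nat \<Rightarrow> real"
  assumes t: "(\<rho> \<longlongrightarrow> 0) at_top" and b: "(\<rho> \<longlongrightarrow> 0) at_bot" and rk: "cheb_rank c K k"
  shows "(\<lambda>n. \<bar>\<Sum>j=k..K. (c j)\<^sup>2 * \<rho> n ^ j\<bar>) summable_on UNIV \<longleftrightarrow> (\<lambda>n. \<bar>\<rho> n\<bar> ^ k) summable_on UNIV"
proof -
  have kK: "k \<le> K" and ck: "c k \<noteq> 0" using rk unfolding cheb_rank_def by auto
  define H where "H = (\<Sum>j=Suc k..K. (c j)\<^sup>2)"
  have H0: "H \<ge> 0" unfolding H_def by (intro sum_nonneg) simp
  have c2: "(c k)\<^sup>2 > 0" using ck by simp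
  define \<delta> where "\<delta> = min 1 ((c k)\<^sup>2 / (2 * (H + 1)))"
  have d0: "\<delta> > 0" unfolding \<delta>_def using c2 H0 by simp
  define E where "E = {n. \<not> \<bar>\<rho> n\<bar> \<le> \<delta>}"
  have E: "finite E" unfolding E_def by (rule finite_big[OF t b d0])
  have yb: "\<bar>\<rho> n\<bar> \<le> 1" "H * \<bar>\<rho> n\<bar> \<le> (c k)\<^sup>2 / 2" if "n \<notin> E" for n
  proof -
    have n: "\<bar>\<rho> n\<bar> \<le> \<delta>" using that unfolding E_def by simp
    then show "\<bar>\<rho> n\<bar> \<le> 1" unfolding \<delta>_def by simp
    have "H * \<bar>\<rho> n\<bar> \<le> H * ((c k)\<^sup>2 / (2 * (H + 1)))"
      using n H0 unfolding \<delta>_def by (intro mult_left_mono) auto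
    also have "\<dots> = (c k)\<^sup>2 / 2 * (H / (H + 1))" using H0 by (simp add: field_simps)
    also have "\<dots> \<le> (c k)\<^sup>2 / 2 * 1" using H0 c2 by (intro mult_left_mono) auto
    finally show "H * \<bar>\<rho> n\<bar> \<le> (c k)\<^sup>2 / 2" by simp
  qed
  have PB1: "\<bar>\<Sum>j=k..K. (c j)\<^sup>2 * \<rho> n ^ j\<bar> \<le> ((c k)\<^sup>2 + H) * \<bar>\<rho> n\<bar> ^ k" if "n \<notin> E" for n
    using poly_bounds(1)[where k=k and K=K and c=c and y="\<rho> n"] kK ck yb[OF that] unfolding H_def by blast
  have PB2: "(c k)\<^sup>2 / 2 * \<bar>\<rho> n\<bar> ^ k \<le> \<bar>\<Sum>j=k..K. (c j)\<^sup>2 * \<rho> n ^ j\<bar>" if "n \<notin> E" for n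
    using poly_bounds(2)[where k=k and K=K and c=c and y="\<rho> n"] kK ck yb[OF that] unfolding H_def by blast
  show ?thesis
  proof
    assume "(\<lambda>n. \<bar>\<Sum>j=k..K. (c j)\<^sup>2 * \<rho> n ^ j\<bar>) summable_on UNIV"
    then show "(\<lambda>n. \<bar>\<rho> n\<bar> ^ k) summable_on UNIV"
    proof (rule summable_cofin_compare[OF _ E])
      show "0 \<le> 2 / (c k)\<^sup>2" by simp
      fix n assume "n \<notin> E"
      then have "(c k)\<^sup>2 / 2 * \<bar>\<rho> n\<bar> ^ k \<le> \<bar>\<Sum>j=k..K. (c j)\<^sup>2 * \<rho> n ^ j\<bar>" using PB2 by blast
      then show "\<bar>\<rho> n\<bar> ^ k \<le> 2 / (c k)\<^sup>2 * \<bar>\<Sum>j=k..K. (c j)\<^sup>2 * \<rho> n ^ j\<bar>"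
        using c2 by (simp add: field_simps)
    qed simp
  next
    assume "(\<lambda>n. \<bar>\<rho> n\<bar> ^ k) summable_on UNIV"
    then show "(\<lambda>n. \<bar>\<Sum>j=k..K. (c j)\<^sup>2 * \<rho> n ^ j\<bar>) summable_on UNIV"
    proof (rule summable_cofin_compare[OF _ E])
      show "0 \<le> (c k)\<^sup>2 + H" using H0 by simp
      fix n assume "n \<notin> E"
      then show "\<bar>\<Sum>j=k..K. (c j)\<^sup>2 * \<rho> n ^ j\<bar> \<le> ((c k)\<^sup>2 + H) * \<bar>\<rho> n\<bar> ^ k" using PB1 by blast
    qed simp
  qed
qed

theorem lemma4p3:
  fixes sc :: "complex \<Rightarrow> 'a::ring_1 \<Rightarrow> 'a" and st :: "'a \<Rightarrow> 'a" and \<phi> :: "'a \<Rightarrow> complex"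
    and X :: "int \<Rightarrow> 'a" and \<rho> :: "int \<Rightarrow> real"
    and c :: "nat \<Rightarrow> real" and K k :: nat
  assumes "star_prob_space sc st \<phi>"
    and "stationary_std_semicircular sc st \<phi> X \<rho>"
    and "(\<rho> \<longlongrightarrow> 0) at_top" and "(\<rho> \<longlongrightarrow> 0) at_bot"
    and "c 0 = 0"
    and "cheb_rank c K k"
  shows "(\<forall>t::int. \<phi> (cheb_eval sc c K (X 0) * cheb_eval sc c K (X t)) =
            complex_of_real (\<Sum>j=k..K. (c j)\<^sup>2 * (\<rho> t) ^ j))
       \<and> ((\<lambda>n::int. norm (\<phi> (cheb_eval sc c K (X 0) * cheb_eval sc c K (X n)))) summable_on UNIV
            \<longleftrightarrow> (\<lambda>n::int. \<bar>\<rho> n\<bar> ^ k) summable_on UNIV)"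
  proof -
  have P1: "\<phi> (cheb_eval sc c K (X 0) * cheb_eval sc c K (X t)) = complex_of_real (\<Sum>j=k..K. (c j)\<^sup>2 * (\<rho> t) ^ j)" for t
    by (rule part1[OF assms(1) assms(2) assms(6)])
  have "(\<lambda>n::int. norm (\<phi> (cheb_eval sc c K (X 0) * cheb_eval sc c K (X n)))) summable_on UNIV
      \<longleftrightarrow> (\<lambda>n. \<bar>\<Sum>j=k..K. (c j)\<^sup>2 * \<rho> n ^ j\<bar>) summable_on UNIV"
    by (rule summable_on_cong) (simp only: P1 norm_of_real)
  then show ?thesis using P1 part2[OF assms(3) assms(4) assms(6)] by simp
qed

end
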